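(* Let $\{G_i\}$ be a family of connected graphs with common induced subgraph $J$, embedded as $J_i\subseteq G_i$, such that $\{(G_i|J_i)\}$ is isometric, and let $H=\amalg\{(G_i|J_i)\}$. Suppose $\dim_l(H)=\sum_i\dim_l(G_i)$. If, for each $k$, $B_k$ is a local metric basis for $G_k$ (viewed as a subset of $V(H)$), then $B_i\cap B_j=\emptyset$ for all $i\neq j$.
   Context: $d_G$ is shortest-path distance in $G$. A vertex $w$ distinguishes an edge $uv$ of $G$ if $d_G(w,u)\neq d_G(w,v)$. A local metric set of $G$ is a set of vertices such that every edge is distinguished by one of them; a local metric basis is one of minimum cardinality, and $\dim_l(G)$ is that cardinality. $J$ is a common induced subgraph of each $G_i$ via injective maps $\iota_i:V(J)\to V(G_i)$ with $\iota_i(x)\iota_i(y)\in E(G_i)$ iff $xy\in E(J)$; $J_i$ is the induced image, $x^i=\iota_i(x)$. $H=\amalg\{(G_i|J_i)\}$ is obtained from the disjoint union of the $G_i$ by identifying, for each $x\in V(J)$, all $x^i$ into one vertex; each $G_i$ is regarded as a subgraph of $H$ (so distinct $G_i$, $G_j$ share exactly the vertices of $J$). The family is isometric if $d_{G_i}(a^i,b^i)=d_{G_j}(a^j,b^j)$ for all $i,j$ and $a,b\in V(J)$. *)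

theory Defs
  imports Main "HOL-Library.Extended_Nat"
begin

definition graph :: "'v set \<Rightarrow> ('v \<Rightarrow> 'v \<Rightarrow> bool) \<Rightarrow> bool" where
  "graph V E \<longleftrightarrow> finite V \<and> (\<forall>u v. E u v \<longrightarrow> u \<in> V \<and> v \<in> V \<and> E v u \<and> u \<noteq> v)"

definition walk_len :: "'v set \<Rightarrow> ('v \<Rightarrow> 'v \<Rightarrow> bool) \<Rightarrow> 'v \<Rightarrow> 'v \<Rightarrow> nat \<Rightarrow> bool" where
  "walk_len V E u v n \<longleftrightarrow> (\<exists>xs. length xs = Suc n \<and> hd xs = u \<and> last xs = v \<and> set xs \<subseteq> V
       \<and> (\<forall>k < n. E (xs ! k) (xs ! Suc k)))"

text \<open>Shortest-path distance (infinite if no walk exists).\<close>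
definition gdist :: "'v set \<Rightarrow> ('v \<Rightarrow> 'v \<Rightarrow> bool) \<Rightarrow> 'v \<Rightarrow> 'v \<Rightarrow> enat" where
  "gdist V E u v = (INF n \<in> {n. walk_len V E u v n}. enat n)"

definition connected_graph :: "'v set \<Rightarrow> ('v \<Rightarrow> 'v \<Rightarrow> bool) \<Rightarrow> bool" where
  "connected_graph V E \<longleftrightarrow> graph V E \<and> (\<forall>u\<in>V. \<forall>v\<in>V. \<exists>n. walk_len V E u v n)"

definition local_metric_set :: "'v set \<Rightarrow> ('v \<Rightarrow> 'v \<Rightarrow> bool) \<Rightarrow> 'v set \<Rightarrow> bool" where
  "local_metric_set V E S \<longleftrightarrow> S \<subseteq> V \<and>
     (\<forall>u v. E u v \<longrightarrow> (\<exists>w\<in>S. gdist V E w u \<noteq> gdist V E w v))"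

definition local_metric_dim :: "'v set \<Rightarrow> ('v \<Rightarrow> 'v \<Rightarrow> bool) \<Rightarrow> nat" where
  "local_metric_dim V E = (LEAST n. \<exists>S. local_metric_set V E S \<and> card S = n)"

definition local_metric_basis :: "'v set \<Rightarrow> ('v \<Rightarrow> 'v \<Rightarrow> bool) \<Rightarrow> 'v set \<Rightarrow> bool" where
  "local_metric_basis V E S \<longleftrightarrow> local_metric_set V E S \<and> card S = local_metric_dim V E"

text \<open>Graphs G_i = (V i, E i) for i in I, common induced subgraph J = (VJ, EJ)
  embedded by \<iota> i. Vertices of H: Inl x for x in VJ (the identified copies x^i), and
  Inr (i,v) for vertices v of G_i outside the image of J.\<close>

definition amal_map :: "'j set \<Rightarrow> ('i \<Rightarrow> 'j \<Rightarrow> 'v) \<Rightarrow> 'i \<Rightarrow> 'v \<Rightarrow> 'j + ('i \<times> 'v)" where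
  "amal_map VJ \<iota> i v = (if v \<in> \<iota> i ` VJ then Inl (the_inv_into VJ (\<iota> i) v) else Inr (i, v))"

definition amal_V :: "'i set \<Rightarrow> ('i \<Rightarrow> 'v set) \<Rightarrow> 'j set \<Rightarrow> ('i \<Rightarrow> 'j \<Rightarrow> 'v) \<Rightarrow> ('j + ('i \<times> 'v)) set" where
  "amal_V I V VJ \<iota> = (\<Union>i\<in>I. amal_map VJ \<iota> i ` V i)"

definition amal_E :: "'i set \<Rightarrow> ('i \<Rightarrow> 'v \<Rightarrow> 'v \<Rightarrow> bool) \<Rightarrow> 'j set \<Rightarrow> ('i \<Rightarrow> 'j \<Rightarrow> 'v)
    \<Rightarrow> ('j + ('i \<times> 'v)) \<Rightarrow> ('j + ('i \<times> 'v)) \<Rightarrow> bool" where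
  "amal_E I E VJ \<iota> a b \<longleftrightarrow> (\<exists>i\<in>I. \<exists>u v. E i u v \<and> a = amal_map VJ \<iota> i u \<and> b = amal_map VJ \<iota> i v)"

definition induced_embedding :: "'j set \<Rightarrow> ('j \<Rightarrow> 'j \<Rightarrow> bool) \<Rightarrow> 'v set \<Rightarrow> ('v \<Rightarrow> 'v \<Rightarrow> bool) \<Rightarrow> ('j \<Rightarrow> 'v) \<Rightarrow> bool" where
  "induced_embedding VJ EJ V E f \<longleftrightarrow> inj_on f VJ \<and> f ` VJ \<subseteq> V \<and>
     (\<forall>x\<in>VJ. \<forall>y\<in>VJ. E (f x) (f y) \<longleftrightarrow> EJ x y)"

definition isometric_family :: "'i set \<Rightarrow> ('i \<Rightarrow> 'v set) \<Rightarrow> ('i \<Rightarrow> 'v \<Rightarrow> 'v \<Rightarrow> bool) \<Rightarrow> 'j set \<Rightarrow> ('i \<Rightarrow> 'j \<Rightarrow> 'v) \<Rightarrow> bool" where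
  "isometric_family I V E VJ \<iota> \<longleftrightarrow> (\<forall>i\<in>I. \<forall>j\<in>I. \<forall>a\<in>VJ. \<forall>b\<in>VJ.
     gdist (V i) (E i) (\<iota> i a) (\<iota> i b) = gdist (V j) (E j) (\<iota> j a) (\<iota> j b))"

end

theory Submission
  imports Defs
begin


lemma walk_len_0: "walk_len V E u v 0 \<longleftrightarrow> u = v \<and> u \<in> V"
  unfolding walk_len_def
  apply (rule iffI)
   apply (clarsimp simp: length_Suc_conv)
  by (auto intro!: exI[of _ "[v]"])

lemma walk_len_ends: "walk_len V E u v n \<Longrightarrow> u \<in> V \<and> v \<in> V"
  unfolding walk_len_def
  by (metis Zero_not_Suc hd_in_set last_in_set list.size(3) subsetD)

lemma walk_len_snoc:
  assumes "walk_len V E u y n" "E y z" "z \<in> V"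
  shows "walk_len V E u z (Suc n)"
proof -
  obtain xs where xs: "length xs = Suc n" "hd xs = u" "last xs = y" "set xs \<subseteq> V"
    "\<forall>k<n. E (xs ! k) (xs ! Suc k)" using assms(1) unfolding walk_len_def by blast
  have ne: "xs \<noteq> []" using xs(1) by auto
  have ly: "xs ! n = y" using xs(1,3) ne by (simp add: last_conv_nth)
  show ?thesis unfolding walk_len_def
  proof (intro exI[of _ "xs @ [z]"] conjI allI impI)
    fix k assume k: "k < Suc n"
    show "E ((xs @ [z]) ! k) ((xs @ [z]) ! Suc k)"
    proof (cases "k < n")
      case True thus ?thesis using xs(1,5) by (simp add: nth_append)
    next
      case False then have "k = n" using k by simp
      thus ?thesis using xs(1) ly assms(2) by (simp add: nth_append)
    qed
  qed (use xs ne assms(3) in auto)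
qed

lemma walk_len_butlast:
  assumes "walk_len V E u z (Suc n)"
  shows "\<exists>y. walk_len V E u y n \<and> E y z"
proof -
  obtain xs where xs: "length xs = Suc (Suc n)" "hd xs = u" "last xs = z" "set xs \<subseteq> V"
    "\<forall>k<Suc n. E (xs ! k) (xs ! Suc k)" using assms(1) unfolding walk_len_def by blast
  define ys where "ys = take (Suc n) xs"
  have lz: "xs ! Suc n = z" using xs(1,3) by (metis diff_Suc_1 last_conv_nth list.size(3) nat.distinct(1))
  have "walk_len V E u (xs ! n) n" unfolding walk_len_def
  proof (intro exI[of _ ys] conjI allI impI)
    show "length ys = Suc n" using xs(1) ys_def by simp
    show "hd ys = u" using xs(1,2) ys_def by (simp add: hd_take)
    have "length ys = Suc n" using xs(1) ys_def by simp
    hence "last ys = ys ! n" by (metis diff_Suc_1 last_conv_nth list.size(3) nat.distinct(1))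
    thus "last ys = xs ! n" using ys_def by simp
    show "set ys \<subseteq> V" using xs(4) ys_def by (meson order_trans set_take_subset)
    fix k assume "k < n" thus "E (ys ! k) (ys ! Suc k)" using xs(5) ys_def by simp
  qed
  moreover have "E (xs ! n) z" using xs(5) lz by auto
  ultimately show ?thesis by blast
qed

lemma walk_len_append:
  "walk_len V E u v m \<Longrightarrow> walk_len V E v w n \<Longrightarrow> walk_len V E u w (m + n)"
proof (induction n arbitrary: w)
  case 0 thus ?case by (simp add: walk_len_0)
next
  case (Suc n)
  obtain y where y: "walk_len V E v y n" "E y w" using walk_len_butlast[OF Suc.prems(2)] by blast
  have "w \<in> V" using walk_len_ends[OF Suc.prems(2)] by simp
  thus ?case using Suc.IH[OF Suc.prems(1) y(1)] y(2) walk_len_snoc by fastforce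
qed

lemma gdist_some: "walk_len V E u v m \<Longrightarrow> gdist V E u v = enat (LEAST m. walk_len V E u v m)"
  unfolding gdist_def
  apply (rule antisym)
   apply (rule INF_lower2[of "LEAST m. walk_len V E u v m"]) apply (auto intro: LeastI)[2]
  apply (rule INF_greatest) by (auto intro: Least_le)

lemma gdist_none: "\<not>(\<exists>m. walk_len V E u v m) \<Longrightarrow> gdist V E u v = \<infinity>"
  unfolding gdist_def by (simp add: top_enat_def[symmetric])

lemma gdist_le: "gdist V E u v \<le> enat n \<longleftrightarrow> (\<exists>m\<le>n. walk_len V E u v m)"
proof (cases "\<exists>m. walk_len V E u v m")
  case True
  then obtain m where m: "walk_len V E u v m" by blast
  show ?thesis unfolding gdist_some[OF m] 
    by (metis (mono_tags, lifting) LeastI enat_ord_simps(1) le_trans m not_less_Least not_le_imp_less)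
next
  case False thus ?thesis using gdist_none[OF False] by auto
qed

lemma enat_eqI:
  assumes that: "\<And>n. (x::enat) \<le> enat n \<longleftrightarrow> y \<le> enat n" shows "x = y"
proof (cases x)
  case (enat a) note xa = this
  show ?thesis
  proof (cases y)
    case (enat b) thus ?thesis using xa that[of a] that[of b] by auto
  next
    case infinity thus ?thesis using xa that[of a] by auto
  qed
next
  case infinity note xi = this
  show ?thesis
  proof (cases y)
    case (enat b) thus ?thesis using xi that[of b] by auto
  qed (use xi in auto)
qed

lemma gdist_eqI:
  "(\<And>n. (\<exists>m\<le>n. walk_len V E u v m) \<longleftrightarrow> (\<exists>m\<le>n. walk_len V' E' u' v' m))
   \<Longrightarrow> gdist V E u v = gdist V' E' u' v'"
  by (rule enat_eqI) (simp add: gdist_le)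



lemma graph_edge: "graph V E \<Longrightarrow> E u v \<Longrightarrow> u \<in> V \<and> v \<in> V"
  unfolding graph_def apply (drule conjunct2) apply (drule spec[of _ u]) apply (drule spec[of _ v]) by blast

lemma amal_map_eq:
  assumes "inj_on (\<iota> i) VJ" "inj_on (\<iota> j) VJ" "amal_map VJ \<iota> i v = amal_map VJ \<iota> j v'"
  shows "(i = j \<and> v = v') \<or> (\<exists>x\<in>VJ. v = \<iota> i x \<and> v' = \<iota> j x)"
proof (cases "v \<in> \<iota> i ` VJ")
  case True
  then obtain x where x: "x \<in> VJ" "v = \<iota> i x" by blast
  have ai: "amal_map VJ \<iota> i v = Inl x" using True x assms(1) unfolding amal_map_def
    by (simp add: the_inv_into_f_f)
  show ?thesis
  proof (cases "v' \<in> \<iota> j ` VJ")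
    case True
    then obtain y where y: "y \<in> VJ" "v' = \<iota> j y" by blast
    have "amal_map VJ \<iota> j v' = Inl y" using True y assms(2) unfolding amal_map_def
      by (simp add: the_inv_into_f_f)
    thus ?thesis using ai assms(3) x y by auto
  next
    case False thus ?thesis using ai assms(3) unfolding amal_map_def by simp
  qed
next
  case False
  then have ai: "amal_map VJ \<iota> i v = Inr (i, v)" unfolding amal_map_def by simp
  show ?thesis using assms(3) ai unfolding amal_map_def by (auto split: if_splits)
qed

lemma dist_preserve:
  assumes kI: "k \<in> I"
    and gr: "\<And>i. i \<in> I \<Longrightarrow> graph (V i) (E i)"
    and emb: "\<And>i. i \<in> I \<Longrightarrow> inj_on (\<iota> i) VJ \<and> \<iota> i ` VJ \<subseteq> V i"
    and iso: "isometric_family I V E VJ \<iota>"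
    and a: "a \<in> V k" and b: "b \<in> V k"
  shows "gdist (amal_V I V VJ \<iota>) (amal_E I E VJ \<iota>) (amal_map VJ \<iota> k a) (amal_map VJ \<iota> k b)
       = gdist (V k) (E k) a b"
proof -
  let ?H = "amal_V I V VJ \<iota>" and ?EH = "amal_E I E VJ \<iota>"
  let ?f = "amal_map VJ \<iota>"
  define W where "W i x y n \<longleftrightarrow> (\<exists>m\<le>n. walk_len (V i) (E i) x y m)" for i x y n
  define R where "R i v n \<longleftrightarrow> (\<exists>y\<in>VJ. \<exists>n1 n2. W k a (\<iota> k y) n1 \<and> W i (\<iota> i y) v n2 \<and> n1 + n2 \<le> n)
       \<or> (i = k \<and> W k a v n)" for i v n
  have isoW: "W j (\<iota> j y) (\<iota> j x) n \<longleftrightarrow> W i (\<iota> i y) (\<iota> i x) n"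
    if "i \<in> I" "j \<in> I" "x \<in> VJ" "y \<in> VJ" for i j x y n
  proof -
    have "gdist (V j) (E j) (\<iota> j y) (\<iota> j x) = gdist (V i) (E i) (\<iota> i y) (\<iota> i x)"
      using iso that unfolding isometric_family_def by blast
    thus ?thesis unfolding W_def gdist_le[symmetric] by simp
  qed
  have transfer: "R i v m" if "i \<in> I" "j \<in> I" "R j v' m" "?f j v' = ?f i v" for i j v v' m
  proof -
    have "(j = i \<and> v' = v) \<or> (\<exists>x\<in>VJ. v' = \<iota> j x \<and> v = \<iota> i x)"
      using amal_map_eq[OF _ _ that(4)] emb that(1,2) by blast
    thus ?thesis
    proof
      assume "j = i \<and> v' = v" thus ?thesis using that(3) by simp
    next
      assume "\<exists>x\<in>VJ. v' = \<iota> j x \<and> v = \<iota> i x"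
      then obtain x where x: "x \<in> VJ" "v' = \<iota> j x" "v = \<iota> i x" by blast
      from that(3)[unfolded R_def] show ?thesis
      proof
        assume "\<exists>y\<in>VJ. \<exists>n1 n2. W k a (\<iota> k y) n1 \<and> W j (\<iota> j y) v' n2 \<and> n1 + n2 \<le> m"
        then obtain y n1 n2 where "y \<in> VJ" "W k a (\<iota> k y) n1" "W j (\<iota> j y) v' n2" "n1 + n2 \<le> m"
          by blast
        then have "W i (\<iota> i y) v n2" using isoW[OF that(1,2) x(1), of y n2] x by simp
        thus ?thesis using \<open>y \<in> VJ\<close> \<open>W k a (\<iota> k y) n1\<close> \<open>n1 + n2 \<le> m\<close>
          unfolding R_def by blast
      next
        assume "j = k \<and> W k a v' m"
        moreover have "W i (\<iota> i x) (\<iota> i x) 0" unfolding W_def using emb[OF that(1)] x(1)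
          by (auto simp: walk_len_0)
        ultimately have "W k a (\<iota> k x) m" "W i (\<iota> i x) v 0" "m + 0 \<le> m" using x by auto
        thus ?thesis using x(1) unfolding R_def by blast
      qed
    qed
  qed
  have extend: "R j v' (Suc n)" if "j \<in> I" "R j u n" "E j u v'" for j u v' n
  proof -
    have v': "v' \<in> V j" using gr[OF that(1)] that(3) by (simp add: graph_edge)
    have Wext: "W i x v' (Suc n2)" if w1: "W i x u n2" and w2: "E i u v'" and w3: "v' \<in> V i" for i x n2
    proof -
      obtain m where "m \<le> n2" "walk_len (V i) (E i) x u m" using w1 unfolding W_def by blast
      thus ?thesis using walk_len_snoc[of "V i" "E i" x u m v'] w2 w3 unfolding W_def
        by (intro exI[of _ "Suc m"]) simp
    qed
    from that(2)[unfolded R_def] show ?thesis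
    proof
      assume "\<exists>y\<in>VJ. \<exists>n1 n2. W k a (\<iota> k y) n1 \<and> W j (\<iota> j y) u n2 \<and> n1 + n2 \<le> n"
      then obtain y n1 n2 where "y \<in> VJ" "W k a (\<iota> k y) n1" "W j (\<iota> j y) u n2" "n1 + n2 \<le> n"
        by blast
      then have "y \<in> VJ" "W k a (\<iota> k y) n1" "W j (\<iota> j y) v' (Suc n2)" "n1 + Suc n2 \<le> Suc n"
        using Wext[of j "\<iota> j y" n2] that(3) v' by auto
      thus ?thesis unfolding R_def by blast
    next
      assume jk: "j = k \<and> W k a u n"
      hence "W k a v' (Suc n)" using Wext[of k a n] that(3) v' by simp
      thus ?thesis using jk unfolding R_def by simp
    qed
  qed
  have claim: "\<forall>i\<in>I. \<forall>v\<in>V i. ?f i v = z \<longrightarrow> R i v n"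
    if "walk_len ?H ?EH (?f k a) z n" for z n
    using that
  proof (induction n arbitrary: z)
    case 0
    hence z: "z = ?f k a" by (simp add: walk_len_0)
    have Rka: "R k a 0" unfolding R_def W_def using a by (auto simp: walk_len_0)
    show ?case
    proof (intro ballI impI)
      fix i v assume iv: "i \<in> I" "v \<in> V i" "?f i v = z"
      show "R i v 0" using transfer[OF iv(1) kI Rka] z iv(3) by simp
    qed
  next
    case (Suc n)
    obtain y where y: "walk_len ?H ?EH (?f k a) y n" "?EH y z" using walk_len_butlast[OF Suc.prems] by blast
    obtain j u v' where j: "j \<in> I" "E j u v'" "y = ?f j u" "z = ?f j v'"
      using y(2) unfolding amal_E_def by blast
    have u: "u \<in> V j" using gr[OF j(1)] j(2) by (simp add: graph_edge)
    have "R j u n" using Suc.IH[OF y(1)] j(1,3) u by blast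
    hence Rj: "R j v' (Suc n)" using extend[OF j(1) _ j(2)] by blast
    show ?case
    proof (intro ballI impI)
      fix i v assume iv: "i \<in> I" "v \<in> V i" "?f i v = z"
      show "R i v (Suc n)" using transfer[OF iv(1) j(1) Rj] j(4) iv(3) by simp
    qed
  qed
  show ?thesis
  proof (rule gdist_eqI)
    fix n
    show "(\<exists>m\<le>n. walk_len ?H ?EH (?f k a) (?f k b) m) \<longleftrightarrow> (\<exists>m\<le>n. walk_len (V k) (E k) a b m)"
    proof
      assume "\<exists>m\<le>n. walk_len ?H ?EH (?f k a) (?f k b) m"
      then obtain m where m: "m \<le> n" "walk_len ?H ?EH (?f k a) (?f k b) m" by blast
      have "R k b m" using claim[OF m(2)] kI b by blast
      hence "W k a b m" unfolding R_def
      proof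
        assume "\<exists>y\<in>VJ. \<exists>n1 n2. W k a (\<iota> k y) n1 \<and> W k (\<iota> k y) b n2 \<and> n1 + n2 \<le> m"
        then obtain y n1 n2 where "W k a (\<iota> k y) n1" "W k (\<iota> k y) b n2" "n1 + n2 \<le> m" by blast
        then obtain m1 m2 where "m1 \<le> n1" "m2 \<le> n2" "walk_len (V k) (E k) a (\<iota> k y) m1"
           "walk_len (V k) (E k) (\<iota> k y) b m2" "n1 + n2 \<le> m" unfolding W_def by blast
        thus ?thesis unfolding W_def using walk_len_append[of "V k" "E k" a "\<iota> k y" m1 b m2]
          by (intro exI[of _ "m1+m2"]) simp
      qed simp
      thus "\<exists>m\<le>n. walk_len (V k) (E k) a b m" using m(1) unfolding W_def using le_trans by blast
    next
      assume "\<exists>m\<le>n. walk_len (V k) (E k) a b m"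
      then obtain m where m: "m \<le> n" "walk_len (V k) (E k) a b m" by blast
      have "walk_len ?H ?EH (?f k a) (?f k b') m" if "walk_len (V k) (E k) a b' m" for b' m
        using that
      proof (induction m arbitrary: b')
        case 0 thus ?case using kI unfolding amal_V_def by (auto simp: walk_len_0)
      next
        case (Suc m)
        obtain y where y: "walk_len (V k) (E k) a y m" "E k y b'" using walk_len_butlast[OF Suc.prems] by blast
        have "b' \<in> V k" using walk_len_ends[OF Suc.prems] by simp
        hence "?f k b' \<in> ?H" using kI unfolding amal_V_def by blast
        moreover have "?EH (?f k y) (?f k b')" using kI y(2) unfolding amal_E_def by blast
        ultimately show ?case using Suc.IH[OF y(1)] walk_len_snoc[of ?H ?EH] by blast
      qed
      thus "\<exists>m\<le>n. walk_len ?H ?EH (?f k a) (?f k b) m" using m by blast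
    qed
  qed
qed



lemma card_UN_disj:
  assumes fin: "finite I" and finA: "\<And>k. k \<in> I \<Longrightarrow> finite (A k)"
    and eq: "card (\<Union>k\<in>I. A k) = (\<Sum>k\<in>I. card (A k))"
    and ij: "i \<in> I" "j \<in> I" "i \<noteq> j"
  shows "A i \<inter> A j = {}"
proof (rule ccontr)
  assume ne: "A i \<inter> A j \<noteq> {}"
  let ?I' = "I - {i, j}"
  have U: "(\<Union>k\<in>I. A k) = (A i \<union> A j) \<union> (\<Union>k\<in>?I'. A k)" using ij by blast
  have fi: "finite (A i)" "finite (A j)" using finA ij by auto
  have "card (A i \<inter> A j) > 0" using ne fi by (simp add: card_gt_0_iff)
  hence c1: "card (A i \<union> A j) < card (A i) + card (A j)"
    using card_Un_Int[OF fi] by linarith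
  have c2: "card (\<Union>k\<in>?I'. A k) \<le> (\<Sum>k\<in>?I'. card (A k))"
    using fin by (intro card_UN_le) auto
  have "card (\<Union>k\<in>I. A k) \<le> card (A i \<union> A j) + card (\<Union>k\<in>?I'. A k)"
    unfolding U by (rule card_Un_le)
  moreover have "(\<Sum>k\<in>I. card (A k)) = card (A i) + card (A j) + (\<Sum>k\<in>?I'. card (A k))"
  proof -
    have "(\<Sum>k\<in>I. card (A k)) = card (A i) + (\<Sum>k\<in>I - {i}. card (A k))"
      using fin ij by (simp add: sum.remove)
    also have "(\<Sum>k\<in>I - {i}. card (A k)) = card (A j) + (\<Sum>k\<in>I - {i} - {j}. card (A k))"
      using fin ij by (intro sum.remove) auto
    also have "I - {i} - {j} = ?I'" by blast
    finally show ?thesis by simp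
  qed
  ultimately show False using eq c1 c2 by linarith
qed

theorem lemma5:
  fixes I :: "'i set" and V :: "'i \<Rightarrow> 'v set" and E :: "'i \<Rightarrow> 'v \<Rightarrow> 'v \<Rightarrow> bool"
    and VJ :: "'j set" and EJ :: "'j \<Rightarrow> 'j \<Rightarrow> bool" and \<iota> :: "'i \<Rightarrow> 'j \<Rightarrow> 'v"
    and B :: "'i \<Rightarrow> 'v set"
  assumes "finite I"
    and "graph VJ EJ"
    and "\<And>i. i \<in> I \<Longrightarrow> connected_graph (V i) (E i)"
    and "\<And>i. i \<in> I \<Longrightarrow> induced_embedding VJ EJ (V i) (E i) (\<iota> i)"
    and "isometric_family I V E VJ \<iota>"
    and "local_metric_dim (amal_V I V VJ \<iota>) (amal_E I E VJ \<iota>)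
           = (\<Sum>i\<in>I. local_metric_dim (V i) (E i))"
    and "\<And>k. k \<in> I \<Longrightarrow> local_metric_basis (V k) (E k) (B k)"
  shows "\<forall>i\<in>I. \<forall>j\<in>I. i \<noteq> j \<longrightarrow>
           amal_map VJ \<iota> i ` B i \<inter> amal_map VJ \<iota> j ` B j = {}"
proof -
  let ?H = "amal_V I V VJ \<iota>" and ?EH = "amal_E I E VJ \<iota>"
  let ?f = "amal_map VJ \<iota>"
  define A where "A k = ?f k ` B k" for k
  have gr: "graph (V i) (E i)" if "i \<in> I" for i
    using assms(3)[OF that] unfolding connected_graph_def by blast
  have emb: "inj_on (\<iota> i) VJ \<and> \<iota> i ` VJ \<subseteq> V i" if "i \<in> I" for i
    using assms(4)[OF that] unfolding induced_embedding_def by blast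
  have BV: "B k \<subseteq> V k" and lmsB: "local_metric_set (V k) (E k) (B k)"
    and cB: "card (B k) = local_metric_dim (V k) (E k)" if "k \<in> I" for k
    using assms(7)[OF that] unfolding local_metric_basis_def local_metric_set_def by auto
  have finB: "finite (B k)" if "k \<in> I" for k
    using BV[OF that] gr[OF that] unfolding graph_def by (meson finite_subset)
  have finA: "finite (A k)" if "k \<in> I" for k using finB[OF that] unfolding A_def by simp
  have dist: "gdist ?H ?EH (?f k a) (?f k b) = gdist (V k) (E k) a b"
    if "k \<in> I" "a \<in> V k" "b \<in> V k" for k a b
    using dist_preserve[OF that(1) gr emb assms(5) that(2,3)] by blast
  define S where "S = (\<Union>k\<in>I. A k)"
  have lmsS: "local_metric_set ?H ?EH S"
    unfolding local_metric_set_def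
  proof (intro conjI allI impI)
    show "S \<subseteq> ?H" unfolding S_def A_def amal_V_def using BV by blast
    fix x y assume "?EH x y"
    then obtain i u v where i: "i \<in> I" "E i u v" "x = ?f i u" "y = ?f i v"
      unfolding amal_E_def by blast
    have uv: "u \<in> V i" "v \<in> V i" using graph_edge[OF gr[OF i(1)] i(2)] by auto
    obtain w where w: "w \<in> B i" "gdist (V i) (E i) w u \<noteq> gdist (V i) (E i) w v"
      using lmsB[OF i(1)] i(2) unfolding local_metric_set_def by blast
    have wV: "w \<in> V i" using BV[OF i(1)] w(1) by blast
    have "?f i w \<in> S" unfolding S_def A_def using i(1) w(1) by blast
    moreover have "gdist ?H ?EH (?f i w) x \<noteq> gdist ?H ?EH (?f i w) y"
      using w(2) dist[OF i(1) wV uv(1)] dist[OF i(1) wV uv(2)] i(3,4) by simp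
    ultimately show "\<exists>w\<in>S. gdist ?H ?EH w x \<noteq> gdist ?H ?EH w y" by blast
  qed
  have "local_metric_dim ?H ?EH \<le> card S"
    unfolding local_metric_dim_def using lmsS by (intro Least_le) blast
  also have "card S \<le> (\<Sum>k\<in>I. card (A k))"
    unfolding S_def using assms(1) by (rule card_UN_le)
  also have "(\<Sum>k\<in>I. card (A k)) \<le> (\<Sum>k\<in>I. card (B k))"
    unfolding A_def by (rule sum_mono) (rule card_image_le, rule finB)
  also have "(\<Sum>k\<in>I. card (B k)) = (\<Sum>i\<in>I. local_metric_dim (V i) (E i))"
    using cB by simp
  finally have "card S = (\<Sum>k\<in>I. card (A k))"
    using assms(6) \<open>card S \<le> (\<Sum>k\<in>I. card (A k))\<close> \<open>(\<Sum>k\<in>I. card (A k)) \<le> (\<Sum>k\<in>I. card (B k))\<close>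
      \<open>(\<Sum>k\<in>I. card (B k)) = (\<Sum>i\<in>I. local_metric_dim (V i) (E i))\<close>
      \<open>local_metric_dim ?H ?EH \<le> card S\<close> by linarith
  hence eq: "card (\<Union>k\<in>I. A k) = (\<Sum>k\<in>I. card (A k))" unfolding S_def .
  show ?thesis
    using card_UN_disj[OF assms(1) finA eq] unfolding A_def by blast
qed

end
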